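(* Let $G=(V,E,w)$ be an undirected graph with positive real edge weights, $s\in V$, $f\ge1$ an integer, and let $T$, $w'$, $H$ be as in the context. Let $F\subseteq E$ with $|F|\le f$, let $t\in V$ be reachable from $s$ in $G-F$, let $\pi$ be a shortest path from $s$ to $t$ in $G-F$ and $N$ the set of new edges of $\pi$. Let $M$ be a minimum spanning forest of $H-F$ with respect to $w'$, let $\pi'$ be the unique path from $s$ to $t$ in $M$, and let $N'$ be the set of new edges of $\pi'$. Then for every $e'\in N'$, $w'(e')\le \max_{e\in N} w'(e)$.
   Context: For a subgraph $X$ of $G$, $d_X(u,u')$ is the distance between $u,u'$ in $X$ with respect to $w$, and $d_X(u)=d_X(s,u)$. $T$ is a shortest-path tree of $G$ rooted at $s$. Define $w'(u,v)=0$ if $(u,v)\in E(T)$ and $w'(u,v)=d_T(u)+w(u,v)+d_T(v)$ otherwise; $G'=(V,E,w')$. Set $G_0=G'$; for $i=0,\dots,f$ let $M_i$ be the edge set of a minimum spanning forest of $G_i$ with respect to $w'$ and $G_{i+1}=G_i$ minus the edges of $M_i$. $H$ is the spanning subgraph of $G$ with edge set $\bigcup_{i=0}^f M_i$. $X-F$ denotes $X$ with the edges of $F$ removed. An edge is called new (with respect to $F$) if its endpoints lie in different connected components of the forest $T-F$. *)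

theory Defs
  imports Complex_Main
begin

text \<open>Undirected simple graphs: edges are two-element vertex sets; an edge set X
  determines the subgraph (V, X). Paths are lists of distinct vertices.\<close>

definition is_walk :: "'a set set \<Rightarrow> 'a list \<Rightarrow> bool" where
  "is_walk X p \<longleftrightarrow> p \<noteq> [] \<and> (\<forall>i < length p - 1. {p ! i, p ! Suc i} \<in> X)"

definition is_path :: "'a set set \<Rightarrow> 'a list \<Rightarrow> 'a \<Rightarrow> 'a \<Rightarrow> bool" where
  "is_path X p u v \<longleftrightarrow> is_walk X p \<and> distinct p \<and> hd p = u \<and> last p = v"

definition connected_in :: "'a set set \<Rightarrow> 'a \<Rightarrow> 'a \<Rightarrow> bool" where
  "connected_in X u v \<longleftrightarrow> (\<exists>p. is_path X p u v)"

definition path_edges :: "'a list \<Rightarrow> 'a set set" where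
  "path_edges p = {{p ! i, p ! Suc i} | i. i < length p - 1}"

definition path_weight :: "('a set \<Rightarrow> real) \<Rightarrow> 'a list \<Rightarrow> real" where
  "path_weight w p = (\<Sum>i < length p - 1. w {p ! i, p ! Suc i})"

definition dist_in :: "'a set set \<Rightarrow> ('a set \<Rightarrow> real) \<Rightarrow> 'a \<Rightarrow> 'a \<Rightarrow> real" where
  "dist_in X w u v = Inf (path_weight w ` {p. is_path X p u v})"

definition forest :: "'a set set \<Rightarrow> bool" where
  "forest X \<longleftrightarrow> (\<forall>e\<in>X. \<forall>u v. e = {u, v} \<longrightarrow> \<not> connected_in (X - {e}) u v)"

definition sp_tree :: "'a set set \<Rightarrow> ('a set \<Rightarrow> real) \<Rightarrow> 'a \<Rightarrow> 'a set set \<Rightarrow> bool" where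
  "sp_tree E w s T \<longleftrightarrow> T \<subseteq> E \<and> forest T \<and> (\<forall>e\<in>T. \<forall>x\<in>e. connected_in T s x) \<and>
     (\<forall>v. connected_in E s v \<longrightarrow> connected_in T s v \<and> dist_in T w s v = dist_in E w s v)"

definition wprime :: "'a set set \<Rightarrow> ('a set \<Rightarrow> real) \<Rightarrow> 'a \<Rightarrow> 'a set \<Rightarrow> real" where
  "wprime T w s e = (if e \<in> T then 0 else (\<Sum>x\<in>e. dist_in T w s x) + w e)"

definition spanning_forest :: "'a set set \<Rightarrow> 'a set set \<Rightarrow> bool" where
  "spanning_forest X M \<longleftrightarrow> M \<subseteq> X \<and> forest M \<and> (\<forall>u v. connected_in X u v \<longrightarrow> connected_in M u v)"

definition min_spanning_forest :: "'a set set \<Rightarrow> ('a set \<Rightarrow> real) \<Rightarrow> 'a set set \<Rightarrow> bool" where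
  "min_spanning_forest X c M \<longleftrightarrow> spanning_forest X M \<and>
     (\<forall>M'. spanning_forest X M' \<longrightarrow> sum c M \<le> sum c M')"

definition new_edges :: "'a set set \<Rightarrow> 'a set set \<Rightarrow> 'a list \<Rightarrow> 'a set set" where
  "new_edges T F p = {e \<in> path_edges p. \<forall>u v. e = {u, v} \<longrightarrow> \<not> connected_in (T - F) u v}"

end

theory Submission
  imports Defs
begin


abbreviation adj :: "'a set set \<Rightarrow> 'a \<Rightarrow> 'a \<Rightarrow> bool" where
  "adj X a b \<equiv> {a, b} \<in> X"

lemma adj_sym: "adj X a b \<Longrightarrow> adj X b a" by (simp add: insert_commute)

lemma reach_sym: "(adj X)\<^sup>*\<^sup>* u v \<Longrightarrow> (adj X)\<^sup>*\<^sup>* v u"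
proof (induction rule: rtranclp_induct)
  case base then show ?case by simp
next
  case (step y z) then show ?case
    by (meson adj_sym converse_rtranclp_into_rtranclp)
qed

lemma reach_seg:
  assumes "a \<le> b" "b < length p" "\<forall>i. a \<le> i \<and> i < b \<longrightarrow> {p!i, p!Suc i} \<in> Y"
  shows "(adj Y)\<^sup>*\<^sup>* (p!a) (p!b)"
  using assms
proof (induction b)
  case 0 then show ?case by simp
next
  case (Suc b)
  show ?case
  proof (cases "a = Suc b")
    case True then show ?thesis by simp
  next
    case False
    then have "a \<le> b" using Suc by simp
    then have "(adj Y)\<^sup>*\<^sup>* (p!a) (p!b)" using Suc by simp
    moreover have "{p!b, p!Suc b} \<in> Y" using Suc \<open>a \<le> b\<close> by simp
    ultimately show ?thesis by (meson rtranclp.rtrancl_into_rtrancl)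
  qed
qed

lemma walk_reach: "is_walk X p \<Longrightarrow> k < length p \<Longrightarrow> (adj X)\<^sup>*\<^sup>* (p!0) (p!k)"
  by (rule reach_seg) (auto simp: is_walk_def)

lemma path_reach: "is_path X p u v \<Longrightarrow> (adj X)\<^sup>*\<^sup>* u v"
proof -
  assume a: "is_path X p u v"
  then have ne: "p \<noteq> []" by (simp add: is_path_def is_walk_def)
  have "(adj X)\<^sup>*\<^sup>* (p!0) (p!(length p - 1))"
    using a ne by (intro walk_reach) (auto simp: is_path_def)
  then show ?thesis using a ne by (simp add: is_path_def hd_conv_nth last_conv_nth)
qed

lemma reach_path: "(adj X)\<^sup>*\<^sup>* u v \<Longrightarrow> \<exists>p. is_path X p u v"
proof (induction rule: rtranclp_induct)
  case base
  have "is_path X [u] u u" by (simp add: is_path_def is_walk_def)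
  then show ?case by blast
next
  case (step y z)
  then obtain p where p: "is_path X p u y" by blast
  then have ne: "p \<noteq> []" and wk: "\<forall>i < length p - 1. {p ! i, p ! Suc i} \<in> X"
    and d: "distinct p" and h: "hd p = u" and l: "last p = y"
    by (auto simp: is_path_def is_walk_def)
  show ?case
  proof (cases "z \<in> set p")
    case True
    then obtain i where i: "i < length p" "p ! i = z" by (meson in_set_conv_nth)
    let ?q = "take (Suc i) p"
    have "is_path X ?q u z"
    proof -
      have lt: "last ?q = z" using i by (subst last_conv_nth) (auto simp: min_def intro: arg_cong[where f="(!) p"])
      have "hd ?q = u" using h ne by (simp add: hd_take)
      moreover have "distinct ?q" using d by simp
      moreover have "?q \<noteq> []" using ne by simp
      moreover have "\<forall>j < length ?q - 1. {?q ! j, ?q ! Suc j} \<in> X" using wk i by auto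
      ultimately show ?thesis using lt by (simp add: is_path_def is_walk_def)
    qed
    then show ?thesis by blast
  next
    case False
    let ?q = "p @ [z]"
    have "\<forall>i < length ?q - 1. {?q ! i, ?q ! Suc i} \<in> X"
    proof (intro allI impI)
      fix i assume "i < length ?q - 1"
      then have "i < length p" by simp
      show "{?q ! i, ?q ! Suc i} \<in> X"
      proof (cases "i < length p - 1")
        case True then have "Suc i < length p" by simp
        then show ?thesis using wk True by (simp add: nth_append)
      next
        case False
        then have "i = length p - 1" using \<open>i < length p\<close> by simp
        then show ?thesis using ne l step(2) by (simp add: nth_append last_conv_nth)
      qed
    qed
    then have "is_path X ?q u z" using ne d h False by (simp add: is_path_def is_walk_def)
    then show ?thesis by blast
  qed
qed

lemma conn_iff: "connected_in X u v \<longleftrightarrow> (adj X)\<^sup>*\<^sup>* u v"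
  unfolding connected_in_def using path_reach reach_path by metis

lemma reach_lift:
  assumes "\<And>p q. {p,q} \<in> A \<Longrightarrow> (adj B)\<^sup>*\<^sup>* p q" "(adj A)\<^sup>*\<^sup>* u v"
  shows "(adj B)\<^sup>*\<^sup>* u v"
  using assms(2)
proof (induction rule: rtranclp_induct)
  case base then show ?case by simp
next
  case (step y z) then show ?case using assms(1) by (meson rtranclp_trans)
qed

lemma reach_mono: "A \<subseteq> B \<Longrightarrow> (adj A)\<^sup>*\<^sup>* u v \<Longrightarrow> (adj B)\<^sup>*\<^sup>* u v"
  by (rule reach_lift[of A]) auto

lemma reach_split:
  assumes "(adj M)\<^sup>*\<^sup>* x y"
  shows "(adj (M - {{a,b}}))\<^sup>*\<^sup>* x y \<or>
    ((adj (M - {{a,b}}))\<^sup>*\<^sup>* x a \<and> (adj (M - {{a,b}}))\<^sup>*\<^sup>* b y) \<or>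
    ((adj (M - {{a,b}}))\<^sup>*\<^sup>* x b \<and> (adj (M - {{a,b}}))\<^sup>*\<^sup>* a y)"
  using assms
proof (induction rule: rtranclp_induct)
  case base then show ?case by simp
next
  case (step y z)
  let ?R = "(adj (M - {{a,b}}))\<^sup>*\<^sup>*"
  show ?case
  proof (cases "{y,z} = {a,b}")
    case False
    then have yz: "?R y z" using step(2) by auto
    show ?thesis using step(3) yz by (meson rtranclp_trans)
  next
    case True
    then have c: "(y = a \<and> z = b) \<or> (y = b \<and> z = a)" by (auto simp: doubleton_eq_iff)
    from c show ?thesis
    proof
      assume "y = a \<and> z = b"
      then have y: "y = a" and z: "z = b" by auto
      from step(3) show ?thesis
      proof (elim disjE conjE)
        assume "?R x y" then show ?thesis using y z by (metis rtranclp.rtrancl_refl)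
      next
        assume "?R x a" "?R b y"
        then show ?thesis using y z by (metis reach_sym rtranclp_trans rtranclp.rtrancl_refl)
      next
        assume "?R x b" "?R a y" then show ?thesis using y z by (metis rtranclp.rtrancl_refl)
      qed
    next
      assume "y = b \<and> z = a"
      then have y: "y = b" and z: "z = a" by auto
      from step(3) show ?thesis
      proof (elim disjE conjE)
        assume "?R x y" then show ?thesis using y z by (metis rtranclp.rtrancl_refl)
      next
        assume "?R x a" "?R b y" then show ?thesis using y z by (metis rtranclp.rtrancl_refl)
      next
        assume "?R x b" "?R a y"
        then show ?thesis using y z by (metis reach_sym rtranclp_trans rtranclp.rtrancl_refl)
      qed
    qed
  qed
qed

lemma crossing:
  assumes "p \<noteq> []" "P (p!0)" "\<not> P (p ! (length p - 1))"
  shows "\<exists>j < length p - 1. P (p!j) \<and> \<not> P (p ! Suc j)"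
proof (rule ccontr)
  assume "\<not> ?thesis"
  then have h: "\<forall>j < length p - 1. P (p!j) \<longrightarrow> P (p ! Suc j)" by auto
  have "k < length p \<Longrightarrow> P (p!k)" for k
    by (induction k) (use assms(2) h in auto)
  then show False using assms by simp
qed

lemma path_cut:
  assumes "forest M" "is_path M p u v" "j < length p - 1"
  shows "\<not> (adj (M - {{p!j, p!Suc j}}))\<^sup>*\<^sup>* u v"
proof
  let ?g = "{p!j, p!Suc j}"
  let ?R = "(adj (M - {?g}))\<^sup>*\<^sup>*"
  assume uv: "?R u v"
  have ne: "p \<noteq> []" and wk: "\<forall>i < length p - 1. {p ! i, p ! Suc i} \<in> M"
    and d: "distinct p" and h: "hd p = u" and l: "last p = v"
    using assms(2) by (auto simp: is_path_def is_walk_def)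
  have neq: "{p!i, p!Suc i} \<noteq> ?g" if "i < length p - 1" "i \<noteq> j" for i
  proof
    assume "{p!i, p!Suc i} = ?g"
    then have "(p!i = p!j \<and> p!Suc i = p!Suc j) \<or> (p!i = p!Suc j \<and> p!Suc i = p!j)"
      by (auto simp: doubleton_eq_iff)
    then show False using d that assms(3) by (auto simp: nth_eq_iff_index_eq)
  qed
  have 1: "?R (p!0) (p!j)"
    by (rule reach_seg) (use assms(3) wk neq in auto)
  have 2: "?R (p!Suc j) (p!(length p - 1))"
    by (rule reach_seg) (use assms(3) wk neq in auto)
  have "?R (p!j) (p!Suc j)"
  proof -
    have u0: "p!0 = u" using h ne by (simp add: hd_conv_nth)
    have vl: "p!(length p - 1) = v" using l ne by (simp add: last_conv_nth)
    have a: "?R (p!j) u" using reach_sym[OF 1] u0 by simp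
    have b: "?R v (p!Suc j)" using reach_sym[OF 2] vl by simp
    show ?thesis using rtranclp_trans[OF rtranclp_trans[OF a uv] b] .
  qed
  moreover have "?g \<in> M" using wk assms(3) by simp
  ultimately show False using assms(1) unfolding forest_def conn_iff by blast
qed




lemma exchange:
  assumes msf: "min_spanning_forest X c M" and fin: "finite X"
    and gM: "{a,b} \<in> M" and xy: "{x,y} \<in> X"
    and nc: "\<not> (adj (M - {{a,b}}))\<^sup>*\<^sup>* x y"
  shows "c {a,b} \<le> c {x,y}"
proof -
  let ?g = "{a,b}"
  let ?M' = "insert {x,y} (M - {?g})"
  have MX: "M \<subseteq> X" and fM: "forest M"
    and spM: "\<And>u v. connected_in X u v \<Longrightarrow> connected_in M u v"
    using msf by (auto simp: min_spanning_forest_def spanning_forest_def)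
  have xyn: "{x,y} \<notin> M - {?g}"
  proof
    assume "{x,y} \<in> M - {?g}"
    then have "(adj (M - {?g}))\<^sup>*\<^sup>* x y" by blast
    then show False using nc by simp
  qed
  have sub: "?M' \<subseteq> X" using MX xy by auto
  have xyM: "(adj M)\<^sup>*\<^sup>* x y"
    using spM[of x y] xy by (simp add: conn_iff r_into_rtranclp)
  have ab: "(adj ?M')\<^sup>*\<^sup>* a b"
  proof -
    have lift: "(adj (M - {?g}))\<^sup>*\<^sup>* u v \<Longrightarrow> (adj ?M')\<^sup>*\<^sup>* u v" for u v
      by (rule reach_mono[of "M - {?g}"]) auto
    have e: "(adj ?M')\<^sup>*\<^sup>* x y" by blast
    from reach_split[OF xyM, of a b] nc
    show ?thesis
    proof (elim disjE conjE)
      assume "(adj (M - {?g}))\<^sup>*\<^sup>* x y" then show ?thesis using nc by simp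
    next
      assume 1: "(adj (M - {?g}))\<^sup>*\<^sup>* x a" and 2: "(adj (M - {?g}))\<^sup>*\<^sup>* b y"
      have "(adj ?M')\<^sup>*\<^sup>* a x" using lift[OF reach_sym[OF 1]] .
      moreover have "(adj ?M')\<^sup>*\<^sup>* y b" using lift[OF reach_sym[OF 2]] .
      ultimately show ?thesis using e by (meson rtranclp_trans)
    next
      assume 1: "(adj (M - {?g}))\<^sup>*\<^sup>* x b" and 2: "(adj (M - {?g}))\<^sup>*\<^sup>* a y"
      have "(adj ?M')\<^sup>*\<^sup>* b x" using lift[OF reach_sym[OF 1]] .
      moreover have "(adj ?M')\<^sup>*\<^sup>* y a" using lift[OF reach_sym[OF 2]] .
      ultimately have "(adj ?M')\<^sup>*\<^sup>* b a" using e by (meson rtranclp_trans)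
      then show ?thesis by (rule reach_sym)
    qed
  qed
  have span: "\<And>u v. connected_in X u v \<Longrightarrow> connected_in ?M' u v"
  proof -
    fix u v assume "connected_in X u v"
    then have "(adj M)\<^sup>*\<^sup>* u v" using spM by (simp add: conn_iff)
    then have "(adj ?M')\<^sup>*\<^sup>* u v"
    proof (rule reach_lift[rotated])
      fix p q assume pq: "{p,q} \<in> M"
      show "(adj ?M')\<^sup>*\<^sup>* p q"
      proof (cases "{p,q} = ?g")
        case False then show ?thesis using pq by blast
      next
        case True
        then have "(p = a \<and> q = b) \<or> (p = b \<and> q = a)" by (auto simp: doubleton_eq_iff)
        then show ?thesis using ab reach_sym by metis
      qed
    qed
    then show "connected_in ?M' u v" by (simp add: conn_iff)
  qed
  have forest': "forest ?M'"
    unfolding forest_def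
  proof (intro ballI allI impI)
    fix h u v assume hM: "h \<in> ?M'" and huv: "h = {u,v}"
    show "\<not> connected_in (?M' - {h}) u v"
    proof (cases "h = {x,y}")
      case True
      then have eq: "?M' - {h} = M - {?g}" using xyn by auto
      have "(u = x \<and> v = y) \<or> (u = y \<and> v = x)" using True huv by (auto simp: doubleton_eq_iff)
      then show ?thesis unfolding eq conn_iff using nc reach_sym by metis
    next
      case False
      then have hM2: "h \<in> M - {?g}" using hM by auto
      show ?thesis
      proof
        assume "connected_in (?M' - {h}) u v"
        then have r: "(adj (?M' - {h}))\<^sup>*\<^sup>* u v" by (simp add: conn_iff)
        have eq: "?M' - {h} - {{x,y}} = M - {?g} - {h}" using xyn by auto
        let ?R = "(adj (M - {?g} - {h}))\<^sup>*\<^sup>*"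
        have sp: "?R u v \<or> (?R u x \<and> ?R y v) \<or> (?R u y \<and> ?R x v)"
          using reach_split[OF r, of x y] unfolding eq .
        have l1: "?R p q \<Longrightarrow> (adj (M - {h}))\<^sup>*\<^sup>* p q" for p q
          by (rule reach_mono[of "M - {?g} - {h}"]) auto
        have l2: "?R p q \<Longrightarrow> (adj (M - {?g}))\<^sup>*\<^sup>* p q" for p q
          by (rule reach_mono[of "M - {?g} - {h}"]) auto
        have nuv: "\<not> (adj (M - {h}))\<^sup>*\<^sup>* u v"
          using fM hM2 huv unfolding forest_def conn_iff by blast
        have uv2: "(adj (M - {?g}))\<^sup>*\<^sup>* u v" using hM2 huv by blast
        from sp show False
        proof (elim disjE conjE)
          assume "?R u v" then show False using l1 nuv by blast
        next
          assume 1: "?R u x" and 2: "?R y v"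
          have "(adj (M - {?g}))\<^sup>*\<^sup>* x u" using reach_sym[OF l2[OF 1]] .
          moreover have "(adj (M - {?g}))\<^sup>*\<^sup>* v y" using reach_sym[OF l2[OF 2]] .
          ultimately have "(adj (M - {?g}))\<^sup>*\<^sup>* x y" using uv2 by (meson rtranclp_trans)
          then show False using nc by simp
        next
          assume 1: "?R u y" and 2: "?R x v"
          have "(adj (M - {?g}))\<^sup>*\<^sup>* y u" using reach_sym[OF l2[OF 1]] .
          moreover have "(adj (M - {?g}))\<^sup>*\<^sup>* v x" using reach_sym[OF l2[OF 2]] .
          ultimately have "(adj (M - {?g}))\<^sup>*\<^sup>* y x" using uv2 by (meson rtranclp_trans)
          then have "(adj (M - {?g}))\<^sup>*\<^sup>* x y" by (rule reach_sym)
          then show False using nc by simp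
        qed
      qed
    qed
  qed
  have "spanning_forest X ?M'" using sub span forest' by (simp add: spanning_forest_def)
  then have le: "sum c M \<le> sum c ?M'" using msf by (simp add: min_spanning_forest_def)
  have finM: "finite M" using MX fin finite_subset by blast
  have s1: "sum c ?M' = c {x,y} + sum c (M - {?g})" using finM xyn by simp
  have s2: "sum c M = c ?g + sum c (M - {?g})" using finM gM by (simp add: sum.remove)
  show ?thesis using le s1 s2 by simp
qed




lemma cut_bound:
  assumes msf: "min_spanning_forest X c M" and fin: "finite X"
    and eM: "{a,b} \<in> M"
    and nc: "\<not> (adj (M - {{a,b}}))\<^sup>*\<^sup>* s t"
    and st: "(adj Y)\<^sup>*\<^sup>* s t" and Y: "\<forall>g\<in>Y. g \<in> X \<and> c g \<le> W"
  shows "c {a,b} \<le> W"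
proof -
  let ?P = "\<lambda>z. (adj (M - {{a,b}}))\<^sup>*\<^sup>* s z"
  obtain p where p: "is_path Y p s t" using reach_path[OF st] by blast
  then have ne: "p \<noteq> []" and wk: "\<forall>i < length p - 1. {p ! i, p ! Suc i} \<in> Y"
    and h: "hd p = s" and l: "last p = t"
    by (auto simp: is_path_def is_walk_def)
  have "?P (p!0)" using h ne by (simp add: hd_conv_nth[symmetric])
  moreover have "\<not> ?P (p ! (length p - 1))" using l ne nc by (simp add: last_conv_nth)
  ultimately obtain j where j: "j < length p - 1" "?P (p!j)" "\<not> ?P (p!Suc j)"
    using crossing[OF ne, of ?P] by blast
  have gY: "{p!j, p!Suc j} \<in> Y" using wk j by simp
  have "\<not> (adj (M - {{a,b}}))\<^sup>*\<^sup>* (p!j) (p!Suc j)" using j by (meson rtranclp_trans)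
  then have "c {a,b} \<le> c {p!j, p!Suc j}"
    using exchange[OF msf fin eM] gY Y by blast
  then show ?thesis using gY Y by fastforce
qed

lemma cycle_bound:
  assumes msf: "min_spanning_forest X c M" and fin: "finite X"
    and e: "{u,v} \<in> X"
  shows "(adj {g\<in>M. c g \<le> c {u,v}})\<^sup>*\<^sup>* u v"
proof (rule ccontr)
  let ?L = "{g\<in>M. c g \<le> c {u,v}}"
  let ?P = "\<lambda>z. (adj ?L)\<^sup>*\<^sup>* u z"
  assume nP: "\<not> ?P v"
  have fM: "forest M" and spM: "\<And>u v. connected_in X u v \<Longrightarrow> connected_in M u v"
    using msf by (auto simp: min_spanning_forest_def spanning_forest_def)
  have "connected_in M u v" using spM e by (simp add: conn_iff r_into_rtranclp)
  then obtain p where p: "is_path M p u v" by (auto simp: connected_in_def)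
  then have ne: "p \<noteq> []" and wk: "\<forall>i < length p - 1. {p ! i, p ! Suc i} \<in> M"
    and h: "hd p = u" and l: "last p = v"
    by (auto simp: is_path_def is_walk_def)
  have "?P (p!0)" using h ne by (simp add: hd_conv_nth[symmetric])
  moreover have "\<not> ?P (p ! (length p - 1))" using l ne nP by (simp add: last_conv_nth)
  ultimately obtain j where j: "j < length p - 1" "?P (p!j)" "\<not> ?P (p!Suc j)"
    using crossing[OF ne, of ?P] by blast
  have gM: "{p!j, p!Suc j} \<in> M" using wk j by simp
  have "{p!j, p!Suc j} \<notin> ?L" using j by (meson mem_Collect_eq rtranclp.rtrancl_into_rtrancl)
  then have big: "c {p!j, p!Suc j} > c {u,v}" using gM by auto
  have "\<not> (adj (M - {{p!j, p!Suc j}}))\<^sup>*\<^sup>* u v" using path_cut[OF fM p j(1)] .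
  then have "c {p!j, p!Suc j} \<le> c {u,v}" using exchange[OF msf fin gM e] by blast
  then show False using big by simp
qed




lemma bottleneck:
  assumes finE: "finite E"
    and ms: "\<forall>i\<le>f. min_spanning_forest (E - (\<Union>j<i. Ms j)) c (Ms i)"
    and finF: "finite F" and cF: "card F \<le> f"
    and e: "{u,v} \<in> E - F"
  shows "(adj {g \<in> (\<Union>i\<le>f. Ms i) - F. c g \<le> c {u,v}})\<^sup>*\<^sup>* u v"
proof (cases "{u,v} \<in> (\<Union>i\<le>f. Ms i)")
  case True then show ?thesis using e by (intro r_into_rtranclp) auto
next
  case False
  let ?L = "\<lambda>i. {g \<in> Ms i. c g \<le> c {u,v}}"
  have sub: "Ms i \<subseteq> E - (\<Union>j<i. Ms j)" if "i \<le> f" for i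
    using ms that by (auto simp: min_spanning_forest_def spanning_forest_def)
  have reach: "(adj (?L i))\<^sup>*\<^sup>* u v" if "i \<le> f" for i
  proof (rule cycle_bound)
    show "min_spanning_forest (E - (\<Union>j<i. Ms j)) c (Ms i)" using ms that by blast
    show "finite (E - (\<Union>j<i. Ms j))" using finE by blast
    show "{u,v} \<in> E - (\<Union>j<i. Ms j)" using e False that by auto
  qed
  have "\<exists>i\<le>f. ?L i \<inter> F = {}"
  proof (rule ccontr)
    assume "\<not> ?thesis"
    then have ne: "\<forall>i\<le>f. \<exists>g. g \<in> ?L i \<inter> F" by blast
    define h where "h = (\<lambda>i. SOME g. g \<in> ?L i \<inter> F)"
    have hin: "h i \<in> ?L i \<inter> F" if "i \<le> f" for i
      unfolding h_def using ne that by (meson someI_ex)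
    have inj: "inj_on h {..f}"
    proof (rule inj_onI)
      fix i j assume i: "i \<in> {..f}" and j: "j \<in> {..f}" and eq: "h i = h j"
      show "i = j"
      proof (rule ccontr)
        assume "i \<noteq> j"
        then consider "i < j" | "j < i" by linarith
        then show False
        proof cases
          case 1
          have "h j \<in> Ms j" using hin j by auto
          then have "h j \<notin> Ms i" using sub[of j] j 1 by auto
          moreover have "h i \<in> Ms i" using hin i by auto
          ultimately show False using eq by simp
        next
          case 2
          have "h i \<in> Ms i" using hin i by auto
          then have "h i \<notin> Ms j" using sub[of i] i 2 by auto
          moreover have "h j \<in> Ms j" using hin j by auto
          ultimately show False using eq by simp
        qed
      qed
    qed
    have "h ` {..f} \<subseteq> F" using hin by auto
    then have "card {..f} \<le> card F" using card_inj_on_le[OF inj _ finF] by blast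
    then show False using cF by simp
  qed
  then obtain i where i: "i \<le> f" "?L i \<inter> F = {}" by blast
  show ?thesis
    by (rule reach_mono[OF _ reach[OF i(1)]]) (use i in auto)
qed

lemma dist_nonneg:
  assumes "connected_in T s x" "T \<subseteq> E" "\<forall>e\<in>E. w e > 0"
  shows "dist_in T w s x \<ge> 0"
  unfolding dist_in_def
proof (rule cInf_greatest)
  show "path_weight w ` {p. is_path T p s x} \<noteq> {}" using assms(1) by (auto simp: connected_in_def)
  fix r assume "r \<in> path_weight w ` {p. is_path T p s x}"
  then obtain p where p: "is_path T p s x" "r = path_weight w p" by blast
  have "\<forall>i < length p - 1. w {p!i, p!Suc i} \<ge> 0"
    using p(1) assms(2,3) by (fastforce simp: is_path_def is_walk_def less_imp_le)
  then show "0 \<le> r" unfolding p(2) path_weight_def by (auto intro: sum_nonneg)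
qed

lemma path_edges_finite: "finite (path_edges p)"
proof -
  have "path_edges p = (\<lambda>i. {p!i, p!Suc i}) ` {..<length p - 1}"
    unfolding path_edges_def by auto
  then show ?thesis by simp
qed




lemma chain_reach:
  assumes "\<forall>i < b. R\<^sup>*\<^sup>* (p!i) (p!Suc i)"
  shows "R\<^sup>*\<^sup>* (p!0) (p!b)"
  using assms
proof (induction b)
  case 0 then show ?case by simp
next
  case (Suc b) then show ?case by (meson less_Suc_eq rtranclp_trans)
qed

theorem lemma3:
  fixes V :: "'a set" and E :: "'a set set" and w :: "'a set \<Rightarrow> real"
    and s t :: 'a and f :: nat and T F :: "'a set set"
    and Ms :: "nat \<Rightarrow> 'a set set" and M :: "'a set set" and \<pi> \<pi>' :: "'a list"
  assumes "finite V"
    and "E \<subseteq> {{u, v} | u v. u \<in> V \<and> v \<in> V \<and> u \<noteq> v}"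
    and "\<forall>e\<in>E. w e > 0"
    and "s \<in> V"
    and "f \<ge> 1"
    and "sp_tree E w s T"
    and "\<forall>i\<le>f. min_spanning_forest (E - (\<Union>j<i. Ms j)) (wprime T w s) (Ms i)"
    and "F \<subseteq> E" and "card F \<le> f"
    and "connected_in (E - F) s t"
    and "is_path (E - F) \<pi> s t"
    and "\<forall>p. is_path (E - F) p s t \<longrightarrow> path_weight w \<pi> \<le> path_weight w p"
    and "min_spanning_forest ((\<Union>i\<le>f. Ms i) - F) (wprime T w s) M"
    and "is_path M \<pi>' s t"
  shows "\<forall>e'\<in>new_edges T F \<pi>'. \<exists>e\<in>new_edges T F \<pi>. wprime T w s e' \<le> wprime T w s e"
proof
  fix e' assume e'N: "e' \<in> new_edges T F \<pi>'"
  let ?c = "wprime T w s"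
  let ?H = "\<Union>i\<le>f. Ms i"
  let ?X = "?H - F"
  let ?N = "new_edges T F \<pi>"
  define W where "W = Max (insert 0 (?c ` ?N))"
  let ?Y = "{g \<in> ?X. ?c g \<le> W}"
  have finE: "finite E"
  proof -
    have "E \<subseteq> Pow V" using assms(2) by auto
    then show ?thesis using assms(1) finite_subset by blast
  qed
  have finF: "finite F" using assms(8) finE finite_subset by blast
  have HE: "?H \<subseteq> E" using assms(7) by (auto simp: min_spanning_forest_def spanning_forest_def)
  have finX: "finite ?X" using HE finE finite_subset by blast
  have TE: "T \<subseteq> E" using assms(6) by (simp add: sp_tree_def)
  have c0: "?c g = 0" if "g \<in> T" for g using that by (simp add: wprime_def)
  have finN: "finite ?N"
    using path_edges_finite[of \<pi>] by (rule finite_subset[rotated]) (auto simp: new_edges_def)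
  have W0: "0 \<le> W" unfolding W_def using finN by (intro Max_ge) auto
  have WN: "?c e \<le> W" if "e \<in> ?N" for e unfolding W_def using finN that by (intro Max_ge) auto
  have bn: "(adj {g \<in> ?X. ?c g \<le> ?c {u,v}})\<^sup>*\<^sup>* u v" if "{u,v} \<in> E - F" for u v
    using bottleneck[OF finE assms(7) finF assms(9) that] .
  have piw: "\<pi> \<noteq> []" "\<forall>i < length \<pi> - 1. {\<pi> ! i, \<pi> ! Suc i} \<in> E - F" "hd \<pi> = s" "last \<pi> = t"
    using assms(11) by (auto simp: is_path_def is_walk_def)
  have step: "(adj ?Y)\<^sup>*\<^sup>* (\<pi>!k) (\<pi>!Suc k)" if k: "k < length \<pi> - 1" for k
  proof -
    let ?e = "{\<pi>!k, \<pi>!Suc k}"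
    have eEF: "?e \<in> E - F" using piw k by blast
    have ePE: "?e \<in> path_edges \<pi>" using k unfolding path_edges_def by blast
    show ?thesis
    proof (cases "?e \<in> ?N")
      case True
      show ?thesis by (rule reach_mono[OF _ bn[OF eEF]]) (use WN[OF True] in auto)
    next
      case False
      then obtain u v where uv: "?e = {u,v}" "connected_in (T - F) u v"
        using ePE unfolding new_edges_def by blast
      have "(adj (T - F))\<^sup>*\<^sup>* u v" using uv(2) by (simp add: conn_iff)
      moreover have "(adj (T - F))\<^sup>*\<^sup>* u v \<Longrightarrow> (adj ?Y)\<^sup>*\<^sup>* u v"
      proof (rule reach_lift)
        fix p q assume pq: "{p,q} \<in> T - F"
        then have "{p,q} \<in> E - F" using TE by auto
        from bn[OF this] show "(adj ?Y)\<^sup>*\<^sup>* p q"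
          by (rule reach_mono[rotated]) (use pq c0 W0 in auto)
      qed
      ultimately have r: "(adj ?Y)\<^sup>*\<^sup>* u v" by blast
      have "(u = \<pi>!k \<and> v = \<pi>!Suc k) \<or> (u = \<pi>!Suc k \<and> v = \<pi>!k)"
        using uv(1) by (auto simp: doubleton_eq_iff)
      then show ?thesis
      proof
        assume "u = \<pi>!k \<and> v = \<pi>!Suc k" then show ?thesis using r by simp
      next
        assume "u = \<pi>!Suc k \<and> v = \<pi>!k" then show ?thesis using reach_sym[OF r] by simp
      qed
    qed
  qed
  have stY: "(adj ?Y)\<^sup>*\<^sup>* s t"
  proof -
    have "(adj ?Y)\<^sup>*\<^sup>* (\<pi>!0) (\<pi>!(length \<pi> - 1))"
      by (rule chain_reach) (use step in auto)
    then show ?thesis using piw by (simp add: hd_conv_nth last_conv_nth)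
  qed
  have e'P: "e' \<in> path_edges \<pi>'" and e'new: "\<forall>u v. e' = {u,v} \<longrightarrow> \<not> connected_in (T - F) u v"
    using e'N by (auto simp: new_edges_def)
  then obtain k where k: "k < length \<pi>' - 1" "e' = {\<pi>'!k, \<pi>'!Suc k}"
    unfolding path_edges_def by blast
  have pw': "\<pi>' \<noteq> []" "\<forall>i < length \<pi>' - 1. {\<pi>' ! i, \<pi>' ! Suc i} \<in> M" "hd \<pi>' = s"
    using assms(14) by (auto simp: is_path_def is_walk_def)
  have MX: "M \<subseteq> ?X" and fM: "forest M"
    using assms(13) by (auto simp: min_spanning_forest_def spanning_forest_def)
  have e'M: "e' \<in> M" using k pw' by simp
  have ncut: "\<not> (adj (M - {e'}))\<^sup>*\<^sup>* s t" using path_cut[OF fM assms(14) k(1)] k(2) by simp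
  have le: "?c e' \<le> W"
  proof -
    have a: "{\<pi>'!k, \<pi>'!Suc k} \<in> M" using e'M k(2) by simp
    have b: "\<not> (adj (M - {{\<pi>'!k, \<pi>'!Suc k}}))\<^sup>*\<^sup>* s t" using ncut k(2) by simp
    have y: "\<forall>g\<in>?Y. g \<in> ?X \<and> ?c g \<le> W" by blast
    have "?c {\<pi>'!k, \<pi>'!Suc k} \<le> W" by (rule cut_bound[OF assms(13) finX a b stY y])
    then show ?thesis using k(2) by simp
  qed
  have e'T: "e' \<notin> T"
  proof
    assume "e' \<in> T"
    moreover have "e' \<notin> F" using e'M MX by auto
    ultimately have "e' \<in> T - F" by simp
    then have "connected_in (T - F) (\<pi>'!k) (\<pi>'!Suc k)"
      using k(2) by (simp add: conn_iff r_into_rtranclp)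
    then show False using e'new k(2) by blast
  qed
  have e'E: "e' \<in> E" using e'M MX HE by auto
  have dnn: "dist_in T w s x \<ge> 0" if "x \<in> e'" for x
  proof -
    have "x = \<pi>'!k \<or> x = \<pi>'!Suc k" using that k(2) by auto
    moreover have "k < length \<pi>'" "Suc k < length \<pi>'" using k(1) by auto
    ultimately obtain j where j: "j < length \<pi>'" "x = \<pi>'!j" by blast
    have "(adj M)\<^sup>*\<^sup>* (\<pi>'!0) (\<pi>'!j)" by (rule reach_seg) (use j pw' in auto)
    moreover have "\<pi>'!0 = s" using pw'(1,3) by (simp add: hd_conv_nth)
    ultimately have r: "(adj M)\<^sup>*\<^sup>* s x" using j(2) by simp
    have "M \<subseteq> E" using MX HE by blast
    then have "(adj E)\<^sup>*\<^sup>* s x" using r by (rule reach_mono)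
    then have "connected_in E s x" by (simp add: conn_iff)
    then have "connected_in T s x" using assms(6) unfolding sp_tree_def by blast
    then show ?thesis by (rule dist_nonneg[OF _ TE assms(3)])
  qed
  have pos: "?c e' > 0"
  proof -
    have "?c e' = (\<Sum>x\<in>e'. dist_in T w s x) + w e'" using e'T by (simp add: wprime_def)
    moreover have "(\<Sum>x\<in>e'. dist_in T w s x) \<ge> 0" using dnn by (simp add: sum_nonneg)
    moreover have "w e' > 0" using e'E assms(3) by blast
    ultimately show ?thesis by linarith
  qed
  have "W \<in> insert 0 (?c ` ?N)" unfolding W_def using finN by (intro Max_in) auto
  moreover have "W \<noteq> 0" using le pos by linarith
  ultimately obtain e where "e \<in> ?N" "?c e = W" by auto
  then show "\<exists>e\<in>?N. ?c e' \<le> ?c e" using le by auto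
qed


end
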